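(* Let $G$ be a locally compact, Hausdorff, étale groupoid and $\alpha$ an automorphism of $G$. The groupoid $G^\infty_\alpha$ is minimal if and only if for each $y \in G^{(0)}$ the set $\bigcup_{n\le 0}\alpha^n([y])$ is dense in $G^{(0)}$. In particular, if $G$ is minimal, so is $G^\infty_\alpha$.
   Context: Let $E$ be the directed graph with one vertex $v$ and countably infinitely many edges $e_1,e_2,\dots$. Let $E^*$ be its finite paths (including $v$), $E^\infty$ its infinite paths, $P = E^*\sqcup E^\infty$, $|\mu|$ the length. $H_\infty$ is the groupoid $\{(\alpha x, |\alpha|-|\beta|, \beta x) : x\in P, \alpha,\beta\in E^*\}\subseteq P\times\mathbb{Z}\times P$ with $(x,m,y)(y,n,z)=(x,m+n,z)$, $(x,m,y)^{-1}=(y,-m,x)$, unit space identified with $P$, topology generated by the sets $Z((\alpha,\beta)\setminus F)=\{(\alpha x,|\alpha|-|\beta|,\beta x): x\in P, x\text{ does not begin with an edge in }F\}$ ($F$ finite); $c(x,m,y)=m$. An automorphism is a structure-preserving homeomorphism. $G^\infty_\alpha$ is $H_\infty\times G$ with product topology, unit space $H_\infty^{(0)}\times G^{(0)}$, $r(h,g)=(r(h),r(g))$, $s(h,g)=(s(h),\alpha^{c(h)}(s(g)))$, product $(h_1,g_1)(h_2,g_2)=(h_1h_2,g_1\alpha^{-c(h_1)}(g_2))$, inverse $(h,g)^{-1}=(h^{-1},\alpha^{c(h)}(g^{-1}))$. For $u \in G^{(0)}$, $[u] = \{r(g) : s(g) = u\}$; a groupoid is minimal if every orbit is dense in its unit space.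 *)

theory Defs
  imports "HOL-Analysis.Analysis"
begin

text \<open>A groupoid is given by its set of arrows, a (total, but only meaningful on
composable pairs) multiplication, an inverse map and a topology on the arrows.\<close>

record 'a tgroupoid =
  arr  :: "'a set"
  mult :: "'a \<Rightarrow> 'a \<Rightarrow> 'a"
  ginv :: "'a \<Rightarrow> 'a"
  top  :: "'a topology"

definition rng :: "'a tgroupoid \<Rightarrow> 'a \<Rightarrow> 'a" where
  "rng G g = mult G g (ginv G g)"

definition src :: "'a tgroupoid \<Rightarrow> 'a \<Rightarrow> 'a" where
  "src G g = mult G (ginv G g) g"

definition composable :: "'a tgroupoid \<Rightarrow> 'a \<Rightarrow> 'a \<Rightarrow> bool" where
  "composable G g h \<longleftrightarrow> g \<in> arr G \<and> h \<in> arr G \<and> src G g = rng G h"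

definition units :: "'a tgroupoid \<Rightarrow> 'a set" where
  "units G = rng G ` arr G"

definition groupoid :: "'a tgroupoid \<Rightarrow> bool" where
  "groupoid G \<longleftrightarrow>
     (\<forall>g\<in>arr G. ginv G g \<in> arr G \<and> ginv G (ginv G g) = g) \<and>
     (\<forall>g h. composable G g h \<longrightarrow> mult G g h \<in> arr G) \<and>
     (\<forall>g h k. composable G g h \<and> composable G h k \<longrightarrow>
        composable G (mult G g h) k \<and> composable G g (mult G h k) \<and>
        mult G (mult G g h) k = mult G g (mult G h k)) \<and>
     (\<forall>g h. composable G g h \<longrightarrow>
        mult G (ginv G g) (mult G g h) = h \<and> mult G (mult G g h) (ginv G h) = g)"

definition topological_groupoid :: "'a tgroupoid \<Rightarrow> bool" where
  "topological_groupoid G \<longleftrightarrow> groupoid G \<and> topspace (top G) = arr G \<and>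
     continuous_map (subtopology (prod_topology (top G) (top G)) {(g,h). composable G g h})
        (top G) (\<lambda>(g,h). mult G g h) \<and>
     continuous_map (top G) (top G) (ginv G)"

definition etale :: "'a tgroupoid \<Rightarrow> bool" where
  "etale G \<longleftrightarrow> (\<forall>g\<in>arr G. \<exists>U. openin (top G) U \<and> g \<in> U \<and>
      openin (subtopology (top G) (units G)) (rng G ` U) \<and>
      homeomorphic_map (subtopology (top G) U) (subtopology (top G) (rng G ` U)) (rng G))"

definition lch_etale_groupoid :: "'a tgroupoid \<Rightarrow> bool" where
  "lch_etale_groupoid G \<longleftrightarrow> topological_groupoid G \<and> etale G \<and>
     Hausdorff_space (top G) \<and> locally_compact_space (top G)"

definition groupoid_aut :: "'a tgroupoid \<Rightarrow> ('a \<Rightarrow> 'a) \<Rightarrow> bool" where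
  "groupoid_aut G \<alpha> \<longleftrightarrow> bij_betw \<alpha> (arr G) (arr G) \<and>
     (\<forall>g\<in>arr G. \<forall>h\<in>arr G. composable G (\<alpha> g) (\<alpha> h) \<longleftrightarrow> composable G g h) \<and>
     (\<forall>g h. composable G g h \<longrightarrow> \<alpha> (mult G g h) = mult G (\<alpha> g) (\<alpha> h)) \<and>
     homeomorphic_map (top G) (top G) \<alpha>"

definition zpow :: "'a tgroupoid \<Rightarrow> ('a \<Rightarrow> 'a) \<Rightarrow> int \<Rightarrow> 'a \<Rightarrow> 'a" where
  "zpow G \<alpha> n = (if 0 \<le> n then \<alpha> ^^ nat n else (inv_into (arr G) \<alpha>) ^^ nat (- n))"

definition orbit :: "'a tgroupoid \<Rightarrow> 'a \<Rightarrow> 'a set" where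
  "orbit G u = {rng G g | g. g \<in> arr G \<and> src G g = u}"

definition dense_in_units :: "'a tgroupoid \<Rightarrow> 'a set \<Rightarrow> bool" where
  "dense_in_units G S \<longleftrightarrow> (subtopology (top G) (units G)) closure_of S = units G"

definition minimal :: "'a tgroupoid \<Rightarrow> bool" where
  "minimal G \<longleftrightarrow> (\<forall>u\<in>units G. dense_in_units G (orbit G u))"

text \<open>Edges e_1, e_2, ... are encoded by natural numbers 0, 1, ...;
finite paths are lists of edges (the vertex v is the empty list),
infinite paths are sequences of edges.\<close>

datatype path = Fin "nat list" | Inf "nat \<Rightarrow> nat"

fun cat :: "nat list \<Rightarrow> path \<Rightarrow> path" where
  "cat a (Fin b) = Fin (a @ b)"
| "cat a (Inf f) = Inf (\<lambda>n. if n < length a then a ! n else f (n - length a))"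

fun first_edge :: "path \<Rightarrow> nat option" where
  "first_edge (Fin []) = None"
| "first_edge (Fin (e # _)) = Some e"
| "first_edge (Inf f) = Some (f 0)"

type_synonym harr = "path \<times> int \<times> path"

definition H_arrows :: "harr set" where
  "H_arrows = {(cat a x, int (length a) - int (length b), cat b x) | x a b. True}"

definition Zset :: "nat list \<Rightarrow> nat list \<Rightarrow> nat set \<Rightarrow> harr set" where
  "Zset a b F = {(cat a x, int (length a) - int (length b), cat b x) | x.
                   \<forall>e\<in>F. first_edge x \<noteq> Some e}"

definition H_inf :: "harr tgroupoid" where
  "H_inf = \<lparr> arr = H_arrows,
             mult = (\<lambda>(x,m,y) (y',n,z). (x, m + n, z)),
             ginv = (\<lambda>(x,m,y). (y, - m, x)),
             top = subtopology
                     (topology_generated_by {Zset a b F | a b F. finite F}) H_arrows \<rparr>"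

definition cocycle :: "harr \<Rightarrow> int" where
  "cocycle h = fst (snd h)"

definition Ginf :: "'a tgroupoid \<Rightarrow> ('a \<Rightarrow> 'a) \<Rightarrow> (harr \<times> 'a) tgroupoid" where
  "Ginf G \<alpha> = \<lparr> arr = arr H_inf \<times> arr G,
     mult = (\<lambda>(h1,g1) (h2,g2). (mult H_inf h1 h2,
                                mult G g1 (zpow G \<alpha> (- cocycle h1) g2))),
     ginv = (\<lambda>(h,g). (ginv H_inf h, zpow G \<alpha> (cocycle h) (ginv G g))),
     top = prod_topology (top H_inf) (top G) \<rparr>"

end

theory Submission
  imports Defs
begin

fun nth_p :: "path \<Rightarrow> nat \<Rightarrow> nat option" where
  "nth_p (Fin l) i = (if i < length l then Some (l!i) else None)"
| "nth_p (Inf f) i = Some (f i)"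

lemma nth_p_cat: "nth_p (cat a t) i = (if i < length a then Some (a!i) else nth_p t (i - length a))"
  by (cases t) (auto simp: nth_append)

lemma first_edge_nth: "first_edge t = nth_p t 0"
  by (cases t rule: first_edge.cases) auto

lemma cat_Nil[simp]: "cat [] t = t"
  by (cases t) auto

lemma cat_decomp:
  assumes "\<forall>i<length a. nth_p x i = Some (a!i)"
  shows "\<exists>t. x = cat a t"
proof (cases x)
  case (Fin l)
  have len: "length a \<le> length l"
  proof (rule ccontr)
    assume "\<not> ?thesis"
    then have "length l < length a" by simp
    with assms Fin show False by (metis nth_p.simps(1) option.distinct(1) order_less_irrefl)
  qed
  have "take (length a) l = a"
    using assms Fin len by (intro nth_equalityI) (auto split: if_splits)
  then have "l = a @ drop (length a) l" by (metis append_take_drop_id)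
  then show ?thesis using Fin by (metis cat.simps(1))
next
  case (Inf f)
  have "x = cat a (Inf (\<lambda>n. f (n + length a)))"
    using assms Inf by (auto intro!: ext)
  then show ?thesis by blast
qed

lemma cat_same_len:
  assumes "cat a t = cat b t" "length a = length b"
  shows "a = b"
proof (rule nth_equalityI)
  show "length a = length b" by fact
  fix i assume "i < length a"
  then have "nth_p (cat a t) i = nth_p (cat b t) i" using assms by simp
  then show "a ! i = b ! i" using \<open>i < length a\<close> assms(2) by (simp add: nth_p_cat)
qed

lemma cat_empty:
  assumes "cat b t = Fin []" shows "b = [] \<and> t = Fin []"
  using assms by (cases t) auto

definition Qn :: "path \<Rightarrow> nat \<Rightarrow> nat set \<Rightarrow> path \<Rightarrow> bool" where
  "Qn x0 N D x \<longleftrightarrow> (\<forall>i<N. nth_p x i = nth_p x0 i) \<and>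
      (nth_p x N \<in> Some ` D \<longrightarrow> nth_p x N = nth_p x0 N)"

lemma nbhd_gen:
  assumes "generate_topology_on {Zset a b F | a b F. finite F} V"
  shows "(x0,0,x0) \<in> V \<Longrightarrow> \<exists>N D. finite D \<and> (\<forall>i<N. nth_p x0 i \<noteq> None) \<and>
            (\<forall>x. Qn x0 N D x \<longrightarrow> (x,0,x) \<in> V)"
  using assms
proof (induction rule: generate_topology_on.induct)
  case Empty
  then show ?case by simp
next
  case (Int a b)
  then obtain N1 D1 N2 D2 where 1: "finite D1" "\<forall>i<N1. nth_p x0 i \<noteq> None"
      "\<forall>x. Qn x0 N1 D1 x \<longrightarrow> (x,0,x) \<in> a"
    and 2: "finite D2" "\<forall>i<N2. nth_p x0 i \<noteq> None"
      "\<forall>x. Qn x0 N2 D2 x \<longrightarrow> (x,0,x) \<in> b" by auto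
  have sub: "Qn x0 N' D' x" if "Qn x0 (max N1 N2) (D1 \<union> D2) x" "N' \<le> max N1 N2" "D' \<subseteq> D1 \<union> D2" for x N' D'
    using that unfolding Qn_def
    by (metis le_neq_implies_less order_less_le_trans subsetD image_mono)
  show ?case
    apply (rule exI[of _ "max N1 N2"], rule exI[of _ "D1 \<union> D2"])
    using 1 2 sub by (auto simp: max_def)
next
  case (UN K)
  then obtain k where "k \<in> K" "(x0,0,x0) \<in> k" by auto
  with UN.IH[OF this] show ?case by blast
next
  case (Basis s)
  then obtain a b F where s: "s = Zset a b F" "finite F" by auto
  from Basis.prems s obtain t where t: "x0 = cat a t" "0 = int (length a) - int (length b)" "x0 = cat b t"
      "\<forall>e\<in>F. first_edge t \<noteq> Some e"
    unfolding Zset_def by blast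
  then have ab: "a = b" using cat_same_len by (metis eq_iff_diff_eq_0 of_nat_eq_iff)
  show ?case
  proof (intro exI conjI)
    show "finite F" by fact
    show "\<forall>i<length a. nth_p x0 i \<noteq> None" using t by (simp add: nth_p_cat)
    show "\<forall>x. Qn x0 (length a) F x \<longrightarrow> (x, 0, x) \<in> s"
    proof (intro allI impI)
    fix x assume Q: "Qn x0 (length a) F x"
    then have "\<forall>i<length a. nth_p x i = Some (a!i)" using t unfolding Qn_def by (simp add: nth_p_cat)
    then obtain t' where x: "x = cat a t'" using cat_decomp by blast
    have "\<forall>e\<in>F. first_edge t' \<noteq> Some e"
    proof
      fix e assume "e \<in> F"
      show "first_edge t' \<noteq> Some e"
      proof
        assume "first_edge t' = Some e"
        then have "nth_p x (length a) = Some e" using x by (simp add: nth_p_cat first_edge_nth)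
        with Q \<open>e\<in>F\<close> have "nth_p x0 (length a) = Some e" unfolding Qn_def by auto
        then have "first_edge t = Some e" using t by (simp add: nth_p_cat first_edge_nth)
        with t \<open>e\<in>F\<close> show False by auto
      qed
    qed
    then show "(x,0,x) \<in> s" using s x ab unfolding Zset_def by auto
  qed
  qed
qed

definition ghom :: "'a tgroupoid \<Rightarrow> ('a \<Rightarrow> 'a) \<Rightarrow> bool" where
  "ghom G \<phi> \<longleftrightarrow> bij_betw \<phi> (arr G) (arr G) \<and>
     (\<forall>g\<in>arr G. \<forall>h\<in>arr G. composable G (\<phi> g) (\<phi> h) \<longleftrightarrow> composable G g h) \<and>
     (\<forall>g h. composable G g h \<longrightarrow> \<phi> (mult G g h) = mult G (\<phi> g) (\<phi> h))"

context fixes G :: "'a tgroupoid" assumes grp: "groupoid G"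
begin

lemma ginv_arr: "g \<in> arr G \<Longrightarrow> ginv G g \<in> arr G" and ginv_ginv: "g \<in> arr G \<Longrightarrow> ginv G (ginv G g) = g"
  using grp unfolding groupoid_def by auto

lemma comp_ginv: "g \<in> arr G \<Longrightarrow> composable G g (ginv G g)"
  and comp_ginv2: "g \<in> arr G \<Longrightarrow> composable G (ginv G g) g"
  using ginv_arr ginv_ginv unfolding composable_def src_def rng_def by auto

lemma mult_arr: "composable G g h \<Longrightarrow> mult G g h \<in> arr G"
  using grp unfolding groupoid_def by auto

lemma assoc: "composable G g h \<Longrightarrow> composable G h k \<Longrightarrow>
        composable G (mult G g h) k \<and> composable G g (mult G h k) \<and>
        mult G (mult G g h) k = mult G g (mult G h k)"
  using grp unfolding groupoid_def by blast

lemma cancel: "composable G g h \<Longrightarrow> mult G (ginv G g) (mult G g h) = h \<and> mult G (mult G g h) (ginv G h) = g"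
  using grp unfolding groupoid_def by blast

lemma rng_arr: "g \<in> arr G \<Longrightarrow> rng G g \<in> arr G"
  and src_arr: "g \<in> arr G \<Longrightarrow> src G g \<in> arr G"
  unfolding rng_def src_def using mult_arr comp_ginv comp_ginv2 by auto

lemma units_arr: "units G \<subseteq> arr G" unfolding units_def using rng_arr by auto

lemma ghom_arr: "ghom G \<phi> \<Longrightarrow> g \<in> arr G \<Longrightarrow> \<phi> g \<in> arr G"
  unfolding ghom_def bij_betw_def by auto

lemma ghom_comp: "ghom G \<phi> \<Longrightarrow> g \<in> arr G \<Longrightarrow> h \<in> arr G \<Longrightarrow> composable G g h \<Longrightarrow> composable G (\<phi> g) (\<phi> h)"
  unfolding ghom_def by auto

lemma ghom_mult: "ghom G \<phi> \<Longrightarrow> composable G g h \<Longrightarrow> \<phi> (mult G g h) = mult G (\<phi> g) (\<phi> h)"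
  unfolding ghom_def by auto

lemma ghom_ginv:
  assumes hom: "ghom G \<phi>" and g: "g \<in> arr G"
  shows "\<phi> (ginv G g) = ginv G (\<phi> g)"
proof -
  define k where "k = \<phi> g"
  define j where "j = \<phi> (ginv G g)"
  have gi: "ginv G g \<in> arr G" using g ginv_arr by auto
  have c1: "composable G g (ginv G g)" "composable G (ginv G g) g" using g comp_ginv comp_ginv2 by auto
  have kj: "composable G k j" unfolding k_def j_def by (rule ghom_comp[OF hom g gi c1(1)])
  have jk: "composable G j k" unfolding k_def j_def by (rule ghom_comp[OF hom gi g c1(2)])
  have rg: "composable G (mult G g (ginv G g)) g" using assoc[OF c1] by blast
  have e0: "mult G (mult G g (ginv G g)) g = g"
    using cancel[OF c1(1)] ginv_ginv[OF g] by simp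
  have "\<phi> (mult G (mult G g (ginv G g)) g) = mult G (\<phi> (mult G g (ginv G g))) k"
    using ghom_mult[OF hom rg] unfolding k_def .
  also have "\<phi> (mult G g (ginv G g)) = mult G k j"
    using ghom_mult[OF hom c1(1)] unfolding k_def j_def .
  finally have e5: "\<phi> (mult G (mult G g (ginv G g)) g) = mult G (mult G k j) k" .
  have e6: "\<phi> (mult G (mult G g (ginv G g)) g) = k" unfolding k_def by (simp only: e0)
  have "mult G (mult G k j) k = k" using e5 e6 by simp
  then have e1: "mult G k (mult G j k) = k" using assoc[OF kj jk] by simp
  have ck: "composable G k (mult G j k)" using assoc[OF kj jk] by blast
  have "mult G (ginv G k) (mult G k (mult G j k)) = mult G j k" using cancel[OF ck] by blast
  with e1 have e2: "mult G j k = mult G (ginv G k) k" by simp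
  have karr: "k \<in> arr G" using kj unfolding composable_def by auto
  have e3: "mult G (mult G j k) (ginv G k) = j" using cancel[OF jk] by blast
  have e4: "mult G (mult G (ginv G k) k) (ginv G k) = ginv G k"
    using cancel[OF comp_ginv2[OF karr]] by blast
  have "j = mult G (mult G j k) (ginv G k)" using e3 by simp
  also have "\<dots> = mult G (mult G (ginv G k) k) (ginv G k)" by (simp only: e2)
  also have "\<dots> = ginv G k" using e4 .
  finally have "j = ginv G k" .
  then show ?thesis unfolding j_def k_def .
qed

lemma ghom_rng: "ghom G \<phi> \<Longrightarrow> g \<in> arr G \<Longrightarrow> \<phi> (rng G g) = rng G (\<phi> g)"
  unfolding rng_def using ghom_mult[of \<phi> g "ginv G g"] comp_ginv[of g] ghom_ginv[of \<phi> g] by simp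

lemma ghom_src: "ghom G \<phi> \<Longrightarrow> g \<in> arr G \<Longrightarrow> \<phi> (src G g) = src G (\<phi> g)"
  unfolding src_def using ghom_mult[of \<phi> "ginv G g" g] comp_ginv2[of g] ghom_ginv[of \<phi> g] by simp

lemma ghom_id: "ghom G id" unfolding ghom_def by auto

lemma ghom_o:
  assumes a: "ghom G \<phi>" and b: "ghom G \<psi>" shows "ghom G (\<phi> \<circ> \<psi>)"
proof -
  have "bij_betw (\<phi> \<circ> \<psi>) (arr G) (arr G)" using a b unfolding ghom_def using bij_betw_trans by blast
  moreover have "composable G ((\<phi> \<circ> \<psi>) g) ((\<phi> \<circ> \<psi>) h) \<longleftrightarrow> composable G g h"
    if "g \<in> arr G" "h \<in> arr G" for g h
    using a b that ghom_arr[OF b] unfolding ghom_def comp_def by metis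
  moreover have "(\<phi> \<circ> \<psi>) (mult G g h) = mult G ((\<phi> \<circ> \<psi>) g) ((\<phi> \<circ> \<psi>) h)"
    if "composable G g h" for g h
  proof -
    have "composable G (\<psi> g) (\<psi> h)" using ghom_comp[OF b] that unfolding composable_def by auto
    then show ?thesis using that ghom_mult[OF a] ghom_mult[OF b] by simp
  qed
  ultimately show ?thesis unfolding ghom_def by blast
qed

lemma ghom_pow: "ghom G \<phi> \<Longrightarrow> ghom G (\<phi> ^^ n)"
proof (induction n)
  case 0 then show ?case using ghom_id by (simp add: id_def)
next
  case (Suc n)
  have "ghom G (\<phi> \<circ> \<phi>^^n)" using ghom_o[OF Suc.prems Suc.IH[OF Suc.prems]] .
  then show ?case by (simp only: funpow.simps)
qed

lemma ghom_inv:
  assumes hom: "ghom G \<phi>"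
  shows "ghom G (inv_into (arr G) \<phi>)"
proof -
  define b where "b = inv_into (arr G) \<phi>"
  have bij: "bij_betw \<phi> (arr G) (arr G)" using hom unfolding ghom_def by blast
  have bb: "bij_betw b (arr G) (arr G)" unfolding b_def by (rule bij_betw_inv_into[OF bij])
  have fb: "\<phi> (b x) = x" if "x \<in> arr G" for x unfolding b_def by (rule bij_betw_inv_into_right[OF bij that])
  have bf: "b (\<phi> x) = x" if "x \<in> arr G" for x unfolding b_def by (rule bij_betw_inv_into_left[OF bij that])
  have ba: "b x \<in> arr G" if "x \<in> arr G" for x by (rule bij_betw_apply[OF bb that])
  have hc: "\<forall>g\<in>arr G. \<forall>h\<in>arr G. composable G (\<phi> g) (\<phi> h) \<longleftrightarrow> composable G g h"
    using hom unfolding ghom_def by blast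
  have cc: "composable G (b g) (b h) \<longleftrightarrow> composable G g h" if "g \<in> arr G" "h \<in> arr G" for g h
  proof -
    have "composable G (\<phi> (b g)) (\<phi> (b h)) \<longleftrightarrow> composable G (b g) (b h)"
      using hc ba[OF that(1)] ba[OF that(2)] by blast
    then show ?thesis using fb[OF that(1)] fb[OF that(2)] by simp
  qed
  have mm: "b (mult G g h) = mult G (b g) (b h)" if "composable G g h" for g h
  proof -
    have ga: "g \<in> arr G" "h \<in> arr G" using that unfolding composable_def by auto
    have c: "composable G (b g) (b h)" using cc[OF ga] that by blast
    have "\<phi> (mult G (b g) (b h)) = mult G (\<phi> (b g)) (\<phi> (b h))" by (rule ghom_mult[OF hom c])
    also have "\<dots> = mult G g h" using fb[OF ga(1)] fb[OF ga(2)] by simp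
    finally have e: "\<phi> (mult G (b g) (b h)) = mult G g h" .
    have "mult G (b g) (b h) \<in> arr G" by (rule mult_arr[OF c])
    then have "b (\<phi> (mult G (b g) (b h))) = mult G (b g) (b h)" by (rule bf)
    then show ?thesis using e by simp
  qed
  have "ghom G b" unfolding ghom_def using bb cc mm by blast
  then show ?thesis unfolding b_def .
qed

end

lemma funpow_inv_left:
  assumes "\<And>x. x \<in> S \<Longrightarrow> b (a x) = x" "\<And>x. x \<in> S \<Longrightarrow> a x \<in> S" "x \<in> S"
  shows "(b ^^ n) ((a ^^ n) x) = x"
  using assms(3)
proof (induction n arbitrary: x)
  case 0 then show ?case by simp
next
  case (Suc n)
  have "(a ^^ Suc n) x = (a ^^ n) (a x)" by (simp add: funpow_Suc_right del: funpow.simps)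
  then have "(b ^^ Suc n) ((a ^^ Suc n) x) = b ((b ^^ n) ((a ^^ n) (a x)))" by simp
  also have "\<dots> = b (a x)" using Suc.IH[OF assms(2)[OF Suc.prems]] by simp
  also have "\<dots> = x" using assms(1) Suc.prems by simp
  finally show ?case .
qed

lemma funpow_in:
  assumes "\<And>x. x \<in> S \<Longrightarrow> a x \<in> S" "x \<in> S"
  shows "(a ^^ n) x \<in> S"
  using assms(2) by (induction n) (auto intro: assms(1))

context fixes G :: "'a tgroupoid" and \<alpha> :: "'a \<Rightarrow> 'a"
  assumes grp: "groupoid G" and hom: "ghom G \<alpha>"
begin

abbreviation "bet \<equiv> inv_into (arr G) \<alpha>"

lemma bij_a: "bij_betw \<alpha> (arr G) (arr G)" using hom unfolding ghom_def by (rule conjunct1)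

lemma a_in: "x \<in> arr G \<Longrightarrow> \<alpha> x \<in> arr G" by (rule bij_betw_apply[OF bij_a])
lemma b_in: "x \<in> arr G \<Longrightarrow> bet x \<in> arr G" by (rule bij_betw_apply[OF bij_betw_inv_into[OF bij_a]])
lemma ba: "x \<in> arr G \<Longrightarrow> bet (\<alpha> x) = x" by (rule bij_betw_inv_into_left[OF bij_a])
lemma ab: "x \<in> arr G \<Longrightarrow> \<alpha> (bet x) = x" by (rule bij_betw_inv_into_right[OF bij_a])

lemma zpow_nat: "zpow G \<alpha> (int n) = \<alpha> ^^ n" unfolding zpow_def by simp
lemma zpow_neg: "zpow G \<alpha> (- int n) = bet ^^ n" unfolding zpow_def by (cases "n = 0") simp_all

lemma ghom_zpow: "ghom G (zpow G \<alpha> c)"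
  unfolding zpow_def using ghom_pow[OF grp hom] ghom_pow[OF grp ghom_inv[OF grp hom]] by simp

lemma zpow_cancel:
  assumes "x \<in> arr G" shows "zpow G \<alpha> (- c) (zpow G \<alpha> c x) = x"
proof (cases "0 \<le> c")
  case True
  then obtain n where c: "c = int n" by (metis nonneg_eq_int)
  show ?thesis unfolding c zpow_nat zpow_neg by (rule funpow_inv_left[OF ba a_in assms])
next
  case False
  then obtain n where c: "c = - int n" by (metis le_cases neg_0_le_iff_le nonneg_eq_int minus_minus)
  show ?thesis unfolding c zpow_neg minus_minus zpow_nat by (rule funpow_inv_left[OF ab b_in assms])
qed

end

lemma cont_bet:
  assumes ts: "topspace (top G) = arr G" and hm: "homeomorphic_map (top G) (top G) \<alpha>"
  shows "continuous_map (top G) (top G) (inv_into (arr G) \<alpha>)"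
proof -
  obtain \<gamma> where hms: "homeomorphic_maps (top G) (top G) \<alpha> \<gamma>" using hm homeomorphic_map_maps by blast
  then have c: "continuous_map (top G) (top G) \<gamma>" and e1: "\<forall>x\<in>arr G. \<gamma> (\<alpha> x) = x"
    and e2: "\<forall>y\<in>arr G. \<alpha> (\<gamma> y) = y" and c2: "continuous_map (top G) (top G) \<alpha>"
    unfolding homeomorphic_maps_def ts by auto
  have inj: "inj_on \<alpha> (arr G)" using e1 by (metis inj_onI)
  have gin: "\<gamma> y \<in> arr G" if "y \<in> arr G" for y
    using c that ts unfolding continuous_map_def by auto
  show ?thesis
  proof (rule continuous_map_eq[OF c])
    fix y assume "y \<in> topspace (top G)"
    then have y: "y \<in> arr G" using ts by simp
    have "inv_into (arr G) \<alpha> (\<alpha> (\<gamma> y)) = \<gamma> y" using inv_into_f_f[OF inj gin[OF y]] .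
    then show "\<gamma> y = inv_into (arr G) \<alpha> y" using e2 y by simp
  qed
qed

lemma cont_pow:
  assumes "continuous_map X X f" shows "continuous_map X X (f ^^ n)"
proof (induction n)
  case 0 then show ?case by (simp add: id_def[symmetric])
next
  case (Suc n)
  have "continuous_map X X (f \<circ> f ^^ n)" by (rule continuous_map_compose[OF Suc assms])
  then show ?case by (simp only: funpow.simps)
qed

lemma H_rng: "rng H_inf (p,m,q) = (p,0,p)" unfolding rng_def H_inf_def by simp
lemma H_src: "src H_inf (p,m,q) = (q,0,q)" unfolding src_def H_inf_def by simp
lemma H_arr: "arr H_inf = H_arrows" unfolding H_inf_def by simp

lemma Ginf_rng:
  assumes grp: "groupoid G" and hom: "ghom G \<alpha>" and g: "g \<in> arr G"
  shows "rng (Ginf G \<alpha>) ((p,m,q),g) = ((p,0,p), rng G g)"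
proof -
  have "zpow G \<alpha> (- m) (zpow G \<alpha> m (ginv G g)) = ginv G g"
    using zpow_cancel[OF grp hom ginv_arr[OF grp g]] .
  then show ?thesis unfolding rng_def Ginf_def H_inf_def cocycle_def by simp
qed

lemma Ginf_src:
  assumes grp: "groupoid G" and hom: "ghom G \<alpha>" and g: "g \<in> arr G"
  shows "src (Ginf G \<alpha>) ((p,m,q),g) = ((q,0,q), zpow G \<alpha> m (src G g))"
proof -
  have "zpow G \<alpha> m (src G g) = mult G (zpow G \<alpha> m (ginv G g)) (zpow G \<alpha> m g)"
    unfolding src_def by (rule ghom_mult[OF grp ghom_zpow[OF grp hom] comp_ginv2[OF grp g]])
  then show ?thesis unfolding src_def Ginf_def H_inf_def cocycle_def by simp
qed

lemma dense_iff:
  assumes "units X \<subseteq> topspace (top X)"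
  shows "dense_in_units X S \<longleftrightarrow>
     (\<forall>u\<in>units X. \<forall>T. openin (top X) T \<and> u \<in> T \<longrightarrow> (\<exists>s\<in>S. s \<in> T \<and> s \<in> units X))"
proof -
  have ts: "topspace (subtopology (top X) (units X)) = units X" using assms by auto
  have "dense_in_units X S \<longleftrightarrow> units X \<subseteq> subtopology (top X) (units X) closure_of S"
    unfolding dense_in_units_def using closure_of_subset_topspace[of "subtopology (top X) (units X)" S] ts
    by auto
  also have "\<dots> \<longleftrightarrow> (\<forall>u\<in>units X. \<forall>T. openin (top X) T \<and> u \<in> T \<longrightarrow> (\<exists>s\<in>S. s \<in> T \<and> s \<in> units X))"
    unfolding in_closure_of subset_iff ts openin_subtopology by blast
  finally show ?thesis .
qed


lemma HA_unit: "(p,m,q) \<in> H_arrows \<Longrightarrow> (p,0,p) \<in> H_arrows"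
  unfolding H_arrows_def by auto

lemma top_H: "topspace (top H_inf) = H_arrows"
proof -
  have "H_arrows \<subseteq> \<Union>{Zset a b F | a b F. finite F}"
  proof
    fix z assume "z \<in> H_arrows"
    then obtain x a b where z: "z = (cat a x, int (length a) - int (length b), cat b x)"
      unfolding H_arrows_def by blast
    then have "z \<in> Zset a b {}" unfolding Zset_def by blast
    then show "z \<in> \<Union>{Zset a b F | a b F. finite F}" by blast
  qed
  then show ?thesis unfolding H_inf_def by auto
qed

lemma top_Ginf: "top (Ginf G \<alpha>) = prod_topology (top H_inf) (top G)" unfolding Ginf_def by simp
lemma arr_Ginf: "arr (Ginf G \<alpha>) = H_arrows \<times> arr G" unfolding Ginf_def H_inf_def by simp

lemma units_Ginf_mem:
  assumes grp: "groupoid G" and hom: "ghom G \<alpha>" and w: "w \<in> units (Ginf G \<alpha>)"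
  shows "\<exists>p m q g. (p,m,q) \<in> H_arrows \<and> g \<in> arr G \<and> w = ((p,0,p), rng G g)"
proof -
  from w obtain k where k: "k \<in> arr (Ginf G \<alpha>)" "w = rng (Ginf G \<alpha>) k" unfolding units_def by blast
  then obtain p m q g where "k = ((p,m,q),g)" "(p,m,q) \<in> H_arrows" "g \<in> arr G"
    unfolding arr_Ginf by (metis mem_Sigma_iff prod_cases3 prod.collapse)
  then show ?thesis using k Ginf_rng[OF grp hom] by metis
qed

lemma units_Ginf_intro:
  assumes grp: "groupoid G" and hom: "ghom G \<alpha>" and "(p,m,q) \<in> H_arrows" "g \<in> arr G"
  shows "((p,0,p), rng G g) \<in> units (Ginf G \<alpha>)"
proof -
  have "((p,m,q),g) \<in> arr (Ginf G \<alpha>)" using assms unfolding arr_Ginf by simp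
  then show ?thesis unfolding units_def using Ginf_rng[OF grp hom assms(4)] by (metis image_eqI)
qed

lemma units_Ginf_top:
  assumes grp: "groupoid G" and hom: "ghom G \<alpha>" and ts: "topspace (top G) = arr G"
  shows "units (Ginf G \<alpha>) \<subseteq> topspace (top (Ginf G \<alpha>))"
proof
  fix w assume "w \<in> units (Ginf G \<alpha>)"
  then obtain p m q g where "(p,m,q) \<in> H_arrows" "g \<in> arr G" "w = ((p,0,p), rng G g)"
    using units_Ginf_mem[OF grp hom] by blast
  then show "w \<in> topspace (top (Ginf G \<alpha>))"
    unfolding top_Ginf topspace_prod_topology top_H ts using HA_unit rng_arr[OF grp] by auto
qed


theorem proposition5p3:
  fixes G :: "'a tgroupoid" and \<alpha> :: "'a \<Rightarrow> 'a"
  assumes "lch_etale_groupoid G"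
    and "groupoid_aut G \<alpha>"
  shows "(minimal (Ginf G \<alpha>) \<longleftrightarrow>
            (\<forall>y\<in>units G. dense_in_units G (\<Union>n\<in>{n::int. n \<le> 0}. zpow G \<alpha> n ` orbit G y)))
         \<and> (minimal G \<longrightarrow> minimal (Ginf G \<alpha>))"
proof -
  have tg: "topological_groupoid G" using assms(1) unfolding lch_etale_groupoid_def by blast
  then have grp: "groupoid G" and ts: "topspace (top G) = arr G"
    unfolding topological_groupoid_def by blast+
  have hom: "ghom G \<alpha>" using assms(2) unfolding groupoid_aut_def ghom_def by blast
  have hm: "homeomorphic_map (top G) (top G) \<alpha>" using assms(2) unfolding groupoid_aut_def by blast
  define S where "S y = (\<Union>n\<in>{n::int. n \<le> 0}. zpow G \<alpha> n ` orbit G y)" for y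
  have uG: "units G \<subseteq> topspace (top G)" using units_arr[OF grp] ts by simp
  have uGi: "units (Ginf G \<alpha>) \<subseteq> topspace (top (Ginf G \<alpha>))" by (rule units_Ginf_top[OF grp hom ts])
  have homb: "ghom G (inv_into (arr G) \<alpha>)" by (rule ghom_inv[OF grp hom])
  have e0: "(Fin [], 0, Fin []) \<in> H_arrows"
    unfolding H_arrows_def by (rule CollectI, rule exI[of _ "Fin []"], rule exI[of _ "[]"], rule exI[of _ "[]"]) simp
  have openH: "openin (top H_inf) H_arrows" using openin_topspace[of "top H_inf"] top_H by simp

  have dir1: "\<forall>y\<in>units G. dense_in_units G (S y)" if mini: "minimal (Ginf G \<alpha>)"
  proof
    fix y assume y: "y \<in> units G"
    then obtain g0 where g0: "g0 \<in> arr G" "y = rng G g0" unfolding units_def by blast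
    show "dense_in_units G (S y)"
      unfolding dense_iff[OF uG]
    proof (intro ballI allI impI)
      fix u T assume u: "u \<in> units G" and T: "openin (top G) T \<and> u \<in> T"
      then obtain g1 where g1: "g1 \<in> arr G" "u = rng G g1" unfolding units_def by blast
      have w: "((Fin [], 0, Fin []), y) \<in> units (Ginf G \<alpha>)"
        using units_Ginf_intro[OF grp hom e0 g0(1)] g0 by simp
      have p: "((Fin [], 0, Fin []), u) \<in> units (Ginf G \<alpha>)"
        using units_Ginf_intro[OF grp hom e0 g1(1)] g1 by simp
      have dd: "dense_in_units (Ginf G \<alpha>) (orbit (Ginf G \<alpha>) ((Fin [], 0, Fin []), y))"
        using mini w unfolding minimal_def by blast
      have opT: "openin (top (Ginf G \<alpha>)) (H_arrows \<times> T)"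
        unfolding top_Ginf openin_prod_Times_iff using openH T by blast
      have "((Fin [], 0, Fin []), u) \<in> H_arrows \<times> T" using e0 T by simp
      then obtain s where s: "s \<in> orbit (Ginf G \<alpha>) ((Fin [], 0, Fin []), y)" "s \<in> H_arrows \<times> T"
        using dd p opT unfolding dense_iff[OF uGi] by blast
      then obtain k where k: "k \<in> arr (Ginf G \<alpha>)" "src (Ginf G \<alpha>) k = ((Fin [], 0, Fin []), y)"
        "s = rng (Ginf G \<alpha>) k" unfolding orbit_def by blast
      then obtain p' m q' g where kk: "k = ((p',m,q'),g)" "(p',m,q') \<in> H_arrows" "g \<in> arr G"
        unfolding arr_Ginf by (metis mem_Sigma_iff prod_cases3 prod.collapse)
      have srck: "((q',0,q'), zpow G \<alpha> m (src G g)) = ((Fin [], 0, Fin []), y)"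
        using k(2) Ginf_src[OF grp hom kk(3)] kk(1) by simp
      then have q': "q' = Fin []" and ym: "zpow G \<alpha> m (src G g) = y" by auto
      from kk(2) obtain x a b where h: "p' = cat a x" "m = int (length a) - int (length b)" "q' = cat b x"
        unfolding H_arrows_def by blast
      then have "b = []" using cat_empty q' by blast
      then have m: "m = int (length a)" using h by simp
      define n where "n = length a"
      have srcn: "src G ((\<alpha> ^^ n) g) = y"
        using ym ghom_src[OF grp ghom_pow[OF grp hom] kk(3)] zpow_nat[OF grp hom] m n_def by simp
      have gn: "(\<alpha> ^^ n) g \<in> arr G" by (rule ghom_arr[OF grp ghom_pow[OF grp hom] kk(3)])
      have orb: "rng G ((\<alpha> ^^ n) g) \<in> orbit G y" unfolding orbit_def using gn srcn by blast
      have rngk: "s = ((p',0,p'), rng G g)" using k(3) kk Ginf_rng[OF grp hom kk(3)] by simp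
      then have rT: "rng G g \<in> T" using s(2) by simp
      have "zpow G \<alpha> (- int n) (rng G ((\<alpha> ^^ n) g)) = zpow G \<alpha> (- int n) (zpow G \<alpha> (int n) (rng G g))"
        using ghom_rng[OF grp ghom_pow[OF grp hom] kk(3)] zpow_nat[OF grp hom] by simp
      also have "\<dots> = rng G g" by (rule zpow_cancel[OF grp hom rng_arr[OF grp kk(3)]])
      finally have ee: "zpow G \<alpha> (- int n) (rng G ((\<alpha> ^^ n) g)) = rng G g" .
      have "rng G g \<in> zpow G \<alpha> (- int n) ` orbit G y" using ee orb by (metis image_eqI)
      then have "rng G g \<in> S y" unfolding S_def by (intro UN_I[of "- int n"]) auto
      moreover have "rng G g \<in> units G" unfolding units_def using kk(3) by blast
      ultimately show "\<exists>s\<in>S y. s \<in> T \<and> s \<in> units G" using rT by blast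
    qed
  qed

  have dir2: "minimal (Ginf G \<alpha>)" if cond: "\<forall>y\<in>units G. dense_in_units G (S y)"
    unfolding minimal_def
  proof
    fix w assume w: "w \<in> units (Ginf G \<alpha>)"
    then obtain y m0 q0 g0 where g0: "(y,m0,q0) \<in> H_arrows" "g0 \<in> arr G" "w = ((y,0,y), rng G g0)"
      using units_Ginf_mem[OF grp hom] by blast
    show "dense_in_units (Ginf G \<alpha>) (orbit (Ginf G \<alpha>) w)"
      unfolding dense_iff[OF uGi]
    proof (intro ballI allI impI)
      fix p Wo assume p: "p \<in> units (Ginf G \<alpha>)" and Wo: "openin (top (Ginf G \<alpha>)) Wo \<and> p \<in> Wo"
      then obtain x0 m1 q1 g1 where g1: "(x0,m1,q1) \<in> H_arrows" "g1 \<in> arr G" "p = ((x0,0,x0), rng G g1)"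
        using units_Ginf_mem[OF grp hom] by blast
      define u0 where "u0 = rng G g1"
      obtain A B where AB: "openin (top H_inf) A" "openin (top G) B" "(x0,0,x0) \<in> A" "u0 \<in> B" "A \<times> B \<subseteq> Wo"
        using Wo g1(3) unfolding top_Ginf openin_prod_topology_alt u0_def by blast
      obtain A'' where A'': "generate_topology_on {Zset a b F | a b F. finite F} A''" "A = A'' \<inter> H_arrows"
        using AB(1) unfolding H_inf_def by (auto simp: openin_subtopology openin_topology_generated_by_iff)
      obtain N D where ND: "finite D" "\<forall>i<N. nth_p x0 i \<noteq> None" "\<forall>x. Qn x0 N D x \<longrightarrow> (x,0,x) \<in> A''"
        using nbhd_gen[OF A''(1)] AB(3) A''(2) by blast
      obtain e where e: "e \<notin> D" using ex_new_if_finite[OF infinite_UNIV_nat ND(1)] by blast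
      define M where "M = Suc N"
      let ?b = "inv_into (arr G) \<alpha>"
      define B'' where "B'' = {z \<in> topspace (top G). (?b ^^ M) z \<in> B}"
      have opB: "openin (top G) B''" unfolding B''_def
        by (rule openin_continuous_map_preimage[OF cont_pow[OF cont_bet[OF ts hm]] AB(2)])
      have u0a: "u0 \<in> arr G" unfolding u0_def by (rule rng_arr[OF grp g1(2)])
      have uM: "(\<alpha> ^^ M) u0 \<in> units G"
        using ghom_rng[OF grp ghom_pow[OF grp hom] g1(2)] ghom_arr[OF grp ghom_pow[OF grp hom] g1(2)]
        unfolding u0_def units_def by (metis image_eqI)
      have "(?b ^^ M) ((\<alpha> ^^ M) u0) = u0" by (rule funpow_inv_left[OF ba[OF grp hom] a_in[OF grp hom] u0a])
      then have uMB: "(\<alpha> ^^ M) u0 \<in> B''" unfolding B''_def using AB(4) uM uG by auto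
      have g0u: "rng G g0 \<in> units G" unfolding units_def using g0(2) by blast
      obtain s where s: "s \<in> S (rng G g0)" "s \<in> B''" using cond g0u uM uMB opB unfolding dense_iff[OF uG] by blast
      then obtain nn z where nz: "nn \<le> 0" "z \<in> orbit G (rng G g0)" "s = zpow G \<alpha> nn z" unfolding S_def by blast
      obtain g' where g': "g' \<in> arr G" "src G g' = rng G g0" "z = rng G g'" using nz(2) unfolding orbit_def by blast
      define j where "j = nat (- nn)"
      have nnj: "nn = - int j" using nz(1) j_def by simp
      have sj: "s = (?b ^^ j) (rng G g')" using nz(3) g'(3) zpow_neg[OF grp hom] nnj by simp
      define L where "L = M + j"
      define g where "g = (?b ^^ L) g'"
      have ga: "g \<in> arr G" unfolding g_def by (rule ghom_arr[OF grp ghom_pow[OF grp homb] g'(1)])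
      define lst where "lst = map (\<lambda>i. the (nth_p x0 i)) [0..<N] @ replicate (Suc j) e"
      have len: "length lst = L" unfolding lst_def L_def M_def by simp
      define x where "x = cat lst y"
      have hA: "(x, int L, y) \<in> H_arrows" unfolding H_arrows_def x_def
        by (rule CollectI, rule exI[of _ y], rule exI[of _ lst], rule exI[of _ "[]"]) (simp add: len)
      have kA: "((x, int L, y), g) \<in> arr (Ginf G \<alpha>)" unfolding arr_Ginf using hA ga by simp
      have "src G g = (?b ^^ L) (src G g')" unfolding g_def
        using ghom_src[OF grp ghom_pow[OF grp homb] g'(1)] by simp
      then have "zpow G \<alpha> (int L) (src G g) = (\<alpha> ^^ L) ((?b ^^ L) (src G g'))"
        using zpow_nat[OF grp hom] by simp
      also have "\<dots> = src G g'" by (rule funpow_inv_left[OF ab[OF grp hom] b_in[OF grp hom] src_arr[OF grp g'(1)]])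
      finally have srck: "src (Ginf G \<alpha>) ((x, int L, y), g) = w"
        using Ginf_src[OF grp hom ga] g'(2) g0(3) by simp
      have "rng G g = (?b ^^ L) (rng G g')" unfolding g_def
        using ghom_rng[OF grp ghom_pow[OF grp homb] g'(1)] by simp
      also have "\<dots> = (?b ^^ M) s" unfolding L_def sj by (simp add: funpow_add)
      finally have rB: "rng G g \<in> B" using s(2) unfolding B''_def by simp
      have Q: "Qn x0 N D x" unfolding Qn_def
      proof (intro conjI allI impI)
        fix i assume i: "i < N"
        then show "nth_p x i = nth_p x0 i" unfolding x_def using ND(2) len
          by (simp add: nth_p_cat lst_def nth_append L_def M_def)
      next
        have "nth_p x N = Some e" unfolding x_def using len
          by (simp add: nth_p_cat lst_def nth_append L_def M_def)
        then show "nth_p x N \<in> Some ` D \<Longrightarrow> nth_p x N = nth_p x0 N" using e by auto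
      qed
      have xA: "(x,0,x) \<in> A" using ND(3) Q A''(2) HA_unit[OF hA] by blast
      have rk: "rng (Ginf G \<alpha>) ((x, int L, y), g) = ((x,0,x), rng G g)" by (rule Ginf_rng[OF grp hom ga])
      have "rng (Ginf G \<alpha>) ((x, int L, y), g) \<in> orbit (Ginf G \<alpha>) w" unfolding orbit_def using kA srck by blast
      moreover have "rng (Ginf G \<alpha>) ((x, int L, y), g) \<in> Wo" using rk xA rB AB(5) by auto
      moreover have "rng (Ginf G \<alpha>) ((x, int L, y), g) \<in> units (Ginf G \<alpha>)" unfolding units_def using kA by blast
      ultimately show "\<exists>s\<in>orbit (Ginf G \<alpha>) w. s \<in> Wo \<and> s \<in> units (Ginf G \<alpha>)" by blast
    qed
  qed

  have dir3: "\<forall>y\<in>units G. dense_in_units G (S y)" if mG: "minimal G"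
  proof
    fix y assume y: "y \<in> units G"
    have sub: "orbit G y \<subseteq> S y"
    proof
      fix z assume "z \<in> orbit G y"
      moreover have "zpow G \<alpha> 0 z = z" unfolding zpow_def by simp
      ultimately show "z \<in> S y" unfolding S_def by force
    qed
    have "dense_in_units G (orbit G y)" using mG y unfolding minimal_def by blast
    then show "dense_in_units G (S y)" using sub unfolding dense_iff[OF uG] by blast
  qed

  show ?thesis using dir1 dir2 dir3 unfolding S_def by blast
qed

end
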